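(* Let $(C,W)$ be a Harish-Chandra pair and $A=A(C,W)$. If there exists a non-zero $w\in W$ on which $C$ coacts trivially (i.e. $w\mapsto w\otimes1$ under $W\to W\otimes C$), then $A$ contains a non-zero odd primitive element. In particular this holds if $C$ is irreducible (coradical equal to $\Bbbk$) and $W\neq0$.
   Context: $\Bbbk$ is a field, $\operatorname{char}\Bbbk\ne2$. For a cocommutative Hopf algebra $J$ and right $J$-module $V$, a dual Harish-Chandra structure is a bilinear map $[\ ,\ ]:V\times V\to P(J)$ (primitives of $J$) with $\sum[u\triangleleft a_{(1)},v\triangleleft a_{(2)}]=\sum S(a_{(1)})[u,v]a_{(2)}$, $[u,v]=[v,u]$, $v\triangleleft[v,v]=0$. A Harish-Chandra pair $(C,W)$: $C$ a finitely generated commutative Hopf algebra, $W$ a finite-dimensional right $C$-comodule, $J=C^\circ$, $V=W^*$ with $\langle v\triangleleft a,w\rangle=\sum\langle v,w_{(0)}\rangle\langle a,w_{(1)}\rangle$, equipped with a bilinear map $V\times V\to P(J)$ making $(J,V)$ a dual Harish-Chandra pair. $A(C,W)$: let $\mathcal H(J,V)=J\ltimes T(V)$ be the smash product of $J$ with the tensor algebra $T(V)$ (elements of $V$ odd primitive, $J$ acting diagonally; product $(a\otimes x)(b\otimes y)=\sum ab_{(1)}\otimes(x\triangleleft b_{(2)})y$), a Hopf superalgebra, and $I(J,V)$ the ideal generated by $1\otimes(uv+vu)-[u,v]\otimes1$. Let $T_c(W)$ be the tensor coalgebra on odd $W$ with the (signed) shuffle product, $\mathcal A(C,W)=C\otimes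 T_c(W)$ with tensor product algebra and smash coproduct $\Delta(c\otimes z)=\sum(c_{(1)}\otimes(z_{(1)})_{(0)})\otimes((z_{(1)})_{(1)}c_{(2)}\otimes z_{(2)})$ (diagonal $C$-coaction on $T^n(W)$), and $\widehat{\mathcal A}(C,W)=\prod_nC\otimes T^n(W)$ its completion. Pair $\mathcal H(J,V)$ with $\widehat{\mathcal A}(C,W)$ by $\langle a\otimes x,c\otimes z\rangle=\langle a,c\rangle\langle x,z\rangle$ (degreewise canonical pairing of $T^n(V)$ with $T^n(W)$). $A(C,W)$ is the annihilator of $I(J,V)$ in $\widehat{\mathcal A}(C,W)$, a super-commutative Hopf superalgebra with induced structure. *)

theory Defs
  imports Complex_Main
begin

text \<open>Elements of a tensor product
C (x) C are represented by finite formal sums (Sweedler lists of pairs); two such sums are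
equal in C (x) C iff all functionals f (x) g agree on them (valid over a field).\<close>

definition lfun :: "('k::field \<Rightarrow> 'c::ab_group_add \<Rightarrow> 'c) \<Rightarrow> ('c \<Rightarrow> 'k) \<Rightarrow> bool" where
  "lfun sc f \<longleftrightarrow> Vector_Spaces.linear sc (*) f"

definition tev :: "('c \<Rightarrow> 'k::field) \<Rightarrow> ('c \<Rightarrow> 'k) \<Rightarrow> ('c \<times> 'c) list \<Rightarrow> 'k" where
  "tev f g t = sum_list (map (\<lambda>(x, y). f x * g y) t)"

definition teq :: "('k::field \<Rightarrow> 'c::ab_group_add \<Rightarrow> 'c) \<Rightarrow> ('c \<times> 'c) list \<Rightarrow> ('c \<times> 'c) list \<Rightarrow> bool" where
  "teq sc t u \<longleftrightarrow> (\<forall>f g. lfun sc f \<longrightarrow> lfun sc g \<longrightarrow> tev f g t = tev f g u)"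

definition comm_hopf_alg ::
  "('k::field \<Rightarrow> 'c::comm_ring_1 \<Rightarrow> 'c) \<Rightarrow> ('c \<Rightarrow> ('c \<times> 'c) list) \<Rightarrow> ('c \<Rightarrow> 'k) \<Rightarrow> ('c \<Rightarrow> 'c) \<Rightarrow> bool" where
  "comm_hopf_alg sc D e S \<longleftrightarrow>
     Vector_Spaces.vector_space sc \<and>
     (\<forall>a x y. sc a (x * y) = sc a x * y) \<and>
     (\<forall>f g. lfun sc f \<longrightarrow> lfun sc g \<longrightarrow> lfun sc (\<lambda>c. tev f g (D c))) \<and>
     (\<forall>x y. teq sc (D (x * y)) [(a * c, b * d). (a, b) \<leftarrow> D x, (c, d) \<leftarrow> D y]) \<and>
     teq sc (D 1) [(1, 1)] \<and>
     (\<forall>f g h c. lfun sc f \<longrightarrow> lfun sc g \<longrightarrow> lfun sc h \<longrightarrow>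
        sum_list (map (\<lambda>(x, y). tev f g (D x) * h y) (D c)) =
        sum_list (map (\<lambda>(x, y). f x * tev g h (D y)) (D c))) \<and>
     lfun sc e \<and> e 1 = 1 \<and> (\<forall>x y. e (x * y) = e x * e y) \<and>
     (\<forall>c. sum_list (map (\<lambda>(x, y). sc (e x) y) (D c)) = c) \<and>
     (\<forall>c. sum_list (map (\<lambda>(x, y). sc (e y) x) (D c)) = c) \<and>
     Vector_Spaces.linear sc sc S \<and>
     (\<forall>c. sum_list (map (\<lambda>(x, y). S x * y) (D c)) = sc (e c) 1) \<and>
     (\<forall>c. sum_list (map (\<lambda>(x, y). x * S y) (D c)) = sc (e c) 1)"

definition subalg :: "('k::field \<Rightarrow> 'c::comm_ring_1 \<Rightarrow> 'c) \<Rightarrow> 'c set \<Rightarrow> bool" where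
  "subalg sc B \<longleftrightarrow> 0 \<in> B \<and> 1 \<in> B \<and> (\<forall>x\<in>B. \<forall>y\<in>B. x + y \<in> B \<and> x * y \<in> B) \<and>
     (\<forall>a. \<forall>x\<in>B. sc a x \<in> B)"

definition fin_gen :: "('k::field \<Rightarrow> 'c::comm_ring_1 \<Rightarrow> 'c) \<Rightarrow> bool" where
  "fin_gen sc \<longleftrightarrow> (\<exists>G. finite G \<and> (\<forall>B. subalg sc B \<longrightarrow> G \<subseteq> B \<longrightarrow> B = UNIV))"

definition c_ideal :: "'c::comm_ring_1 set \<Rightarrow> bool" where
  "c_ideal I \<longleftrightarrow> 0 \<in> I \<and> (\<forall>x\<in>I. \<forall>y\<in>I. x + y \<in> I) \<and> (\<forall>x\<in>I. \<forall>c. c * x \<in> I)"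

text \<open>The finite (Sweedler) dual J = C\<degree>: functionals vanishing on a finite-codimensional ideal.\<close>
definition fin_dual :: "('k::field \<Rightarrow> 'c::comm_ring_1 \<Rightarrow> 'c) \<Rightarrow> ('c \<Rightarrow> 'k) set" where
  "fin_dual sc = {f. lfun sc f \<and> (\<exists>I. c_ideal I \<and>
      (\<exists>T. finite T \<and> (\<forall>c. \<exists>s\<in>module.span sc T. \<exists>i\<in>I. c = s + i)) \<and> (\<forall>x\<in>I. f x = 0))}"

text \<open>Primitive elements of J (the coproduct of J is dual to the product of C, unit of J is e).\<close>
definition prim_dual :: "('k::field \<Rightarrow> 'c::comm_ring_1 \<Rightarrow> 'c) \<Rightarrow> ('c \<Rightarrow> 'k) \<Rightarrow> ('c \<Rightarrow> 'k) set" where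
  "prim_dual sc e = {b \<in> fin_dual sc. \<forall>x y. b (x * y) = b x * e y + e x * b y}"

definition conv :: "('c \<Rightarrow> ('c \<times> 'c) list) \<Rightarrow> ('c \<Rightarrow> 'k::field) \<Rightarrow> ('c \<Rightarrow> 'k) \<Rightarrow> 'c \<Rightarrow> 'k" where
  "conv D a b = (\<lambda>c. tev a b (D c))"

text \<open>W is taken with a basis e_0..e_(m-1); the right coaction is
rho(e_j) = sum_i e_i (x) cf i j.  V = W* with the dual basis.\<close>
definition mat_comodule ::
  "('k::field \<Rightarrow> 'c::comm_ring_1 \<Rightarrow> 'c) \<Rightarrow> ('c \<Rightarrow> ('c \<times> 'c) list) \<Rightarrow> ('c \<Rightarrow> 'k) \<Rightarrow> nat \<Rightarrow> (nat \<Rightarrow> nat \<Rightarrow> 'c) \<Rightarrow> bool" where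
  "mat_comodule sc D e m cf \<longleftrightarrow>
     (\<forall>i<m. \<forall>j<m. teq sc (D (cf i j)) (map (\<lambda>k. (cf i k, cf k j)) [0..<m]) \<and>
        e (cf i j) = (if i = j then 1 else 0))"

text \<open>Dual Harish-Chandra structure, bracket on basis vectors br i j = [e^i, e^j]
(extended bilinearly).  Here e^i \<triangleleft> a = sum_j a(cf i j) e^j, and
(sum S(a1)[u,v]a2)(c) = sum a(S(c1) c3) [u,v](c2).\<close>
definition dual_HC ::
  "('k::field \<Rightarrow> 'c::comm_ring_1 \<Rightarrow> 'c) \<Rightarrow> ('c \<Rightarrow> ('c \<times> 'c) list) \<Rightarrow> ('c \<Rightarrow> 'k) \<Rightarrow> ('c \<Rightarrow> 'c) \<Rightarrow>
    nat \<Rightarrow> (nat \<Rightarrow> nat \<Rightarrow> 'c) \<Rightarrow> (nat \<Rightarrow> nat \<Rightarrow> 'c \<Rightarrow> 'k) \<Rightarrow> bool" where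
  "dual_HC sc D e S m cf br \<longleftrightarrow>
     (\<forall>i<m. \<forall>j<m. br i j \<in> prim_dual sc e) \<and>
     (\<forall>i<m. \<forall>j<m. br i j = br j i) \<and>
     (\<forall>lam :: nat \<Rightarrow> 'k. \<forall>l<m.
        (\<Sum>i<m. lam i * (\<Sum>j<m. \<Sum>k<m. lam j * lam k * br j k (cf i l))) = 0) \<and>
     (\<forall>a\<in>fin_dual sc. \<forall>i<m. \<forall>j<m. \<forall>c.
        (\<Sum>p<m. \<Sum>q<m. a (cf i p * cf j q) * br p q c) =
        sum_list (map (\<lambda>(x, y). sum_list (map (\<lambda>(y1, y2). a (S x * y2) * br i j y1) (D y))) (D c)))"

definition HC_pair ::
  "('k::field \<Rightarrow> 'c::comm_ring_1 \<Rightarrow> 'c) \<Rightarrow> ('c \<Rightarrow> ('c \<times> 'c) list) \<Rightarrow> ('c \<Rightarrow> 'k) \<Rightarrow> ('c \<Rightarrow> 'c) \<Rightarrow>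
    nat \<Rightarrow> (nat \<Rightarrow> nat \<Rightarrow> 'c) \<Rightarrow> (nat \<Rightarrow> nat \<Rightarrow> 'c \<Rightarrow> 'k) \<Rightarrow> bool" where
  "HC_pair sc D e S m cf br \<longleftrightarrow> comm_hopf_alg sc D e S \<and> fin_gen sc \<and>
     mat_comodule sc D e m cf \<and> dual_HC sc D e S m cf br"

definition cw :: "(nat \<Rightarrow> nat \<Rightarrow> 'c::comm_ring_1) \<Rightarrow> nat list \<Rightarrow> nat list \<Rightarrow> 'c" where
  "cw cf I J = prod_list (map (\<lambda>(i, j). cf i j) (zip I J))"

text \<open>H(J,V) = J \<ltimes> T(V): elements are formal sums of (a, I) meaning a (x) e^I (word in the
dual basis).  Smash product on basis elements:
(a (x) e^I)(b (x) e^K) = sum_{|J|=|I|} a\<cdot>b(_ \<cdot> cf_{I,J}) (x) e^J e^K.\<close>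
definition hmul1 :: "('c \<Rightarrow> ('c \<times> 'c) list) \<Rightarrow> nat \<Rightarrow> (nat \<Rightarrow> nat \<Rightarrow> 'c::comm_ring_1) \<Rightarrow>
    ('c \<Rightarrow> 'k::field) \<times> nat list \<Rightarrow> ('c \<Rightarrow> 'k) \<times> nat list \<Rightarrow> (('c \<Rightarrow> 'k) \<times> nat list) list" where
  "hmul1 D m cf p q = (case p of (a, I) \<Rightarrow> case q of (b, K) \<Rightarrow>
     map (\<lambda>J. (conv D a (\<lambda>x. b (x * cw cf I J)), J @ K)) (List.n_lists (length I) [0..<m]))"

definition hmul :: "('c \<Rightarrow> ('c \<times> 'c) list) \<Rightarrow> nat \<Rightarrow> (nat \<Rightarrow> nat \<Rightarrow> 'c::comm_ring_1) \<Rightarrow>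
    (('c \<Rightarrow> 'k::field) \<times> nat list) list \<Rightarrow> (('c \<Rightarrow> 'k) \<times> nat list) list \<Rightarrow> (('c \<Rightarrow> 'k) \<times> nat list) list" where
  "hmul D m cf xs ys = concat [hmul1 D m cf p q. p \<leftarrow> xs, q \<leftarrow> ys]"

text \<open>Generator 1 (x) (e^i e^j + e^j e^i) - [e^i,e^j] (x) 1 of I(J,V).\<close>
definition hgen :: "('c \<Rightarrow> 'k::field) \<Rightarrow> (nat \<Rightarrow> nat \<Rightarrow> 'c \<Rightarrow> 'k) \<Rightarrow> nat \<Rightarrow> nat \<Rightarrow> (('c \<Rightarrow> 'k) \<times> nat list) list" where
  "hgen e br i j = [(e, [i, j]), (e, [j, i]), (\<lambda>c. - br i j c, [])]"

text \<open>Elements of the completion \<Prod>_n C (x) T^n(W): F u is the C-coefficient of e_u.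
Pairing: <a (x) e^I, F> = a (F I).\<close>
definition hpair :: "(('c \<Rightarrow> 'k::field) \<times> nat list) list \<Rightarrow> (nat list \<Rightarrow> 'c) \<Rightarrow> 'k" where
  "hpair xs F = sum_list (map (\<lambda>(a, u). a (F u)) xs)"

text \<open>A(C,W): the annihilator of the two-sided ideal generated by the generators.\<close>
definition A_set ::
  "('k::field \<Rightarrow> 'c::comm_ring_1 \<Rightarrow> 'c) \<Rightarrow> ('c \<Rightarrow> ('c \<times> 'c) list) \<Rightarrow> ('c \<Rightarrow> 'k) \<Rightarrow>
    nat \<Rightarrow> (nat \<Rightarrow> nat \<Rightarrow> 'c) \<Rightarrow> (nat \<Rightarrow> nat \<Rightarrow> 'c \<Rightarrow> 'k) \<Rightarrow> (nat list \<Rightarrow> 'c) set" where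
  "A_set sc D e m cf br = {F. (\<forall>u. \<not> set u \<subseteq> {..<m} \<longrightarrow> F u = 0) \<and>
     (\<forall>a\<in>fin_dual sc. \<forall>b\<in>fin_dual sc. \<forall>I K. set I \<subseteq> {..<m} \<longrightarrow> set K \<subseteq> {..<m} \<longrightarrow>
        (\<forall>i<m. \<forall>j<m. hpair (hmul D m cf (hmul D m cf [(a, I)] (hgen e br i j)) [(b, K)]) F = 0))}"

text \<open>Coproduct of the completion, component in (C (x) e_I) (x) (C (x) e_Q):
sum_{|P|=|I|} sum (F(PQ))_1 (x) cf_{I,P} (F(PQ))_2.\<close>
definition Acop :: "('c \<Rightarrow> ('c \<times> 'c) list) \<Rightarrow> nat \<Rightarrow> (nat \<Rightarrow> nat \<Rightarrow> 'c::comm_ring_1) \<Rightarrow>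
    (nat list \<Rightarrow> 'c) \<Rightarrow> nat list \<Rightarrow> nat list \<Rightarrow> ('c \<times> 'c) list" where
  "Acop D m cf F I Q = concat (map (\<lambda>P. map (\<lambda>(x, y). (x, cw cf I P * y)) (D (F (P @ Q))))
      (List.n_lists (length I) [0..<m]))"

definition is_primitive ::
  "('k::field \<Rightarrow> 'c::comm_ring_1 \<Rightarrow> 'c) \<Rightarrow> ('c \<Rightarrow> ('c \<times> 'c) list) \<Rightarrow> nat \<Rightarrow> (nat \<Rightarrow> nat \<Rightarrow> 'c) \<Rightarrow>
    (nat list \<Rightarrow> 'c) \<Rightarrow> bool" where
  "is_primitive sc D m cf F \<longleftrightarrow> (\<forall>I Q. set I \<subseteq> {..<m} \<longrightarrow> set Q \<subseteq> {..<m} \<longrightarrow>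
     teq sc (Acop D m cf F I Q)
       ((if Q = [] then [(F I, 1)] else []) @ (if I = [] then [(1, F Q)] else [])))"

definition is_odd :: "(nat list \<Rightarrow> 'c::zero) \<Rightarrow> bool" where
  "is_odd F \<longleftrightarrow> (\<forall>u. even (length u) \<longrightarrow> F u = 0)"

definition has_nonzero_odd_primitive ::
  "('k::field \<Rightarrow> 'c::comm_ring_1 \<Rightarrow> 'c) \<Rightarrow> ('c \<Rightarrow> ('c \<times> 'c) list) \<Rightarrow> ('c \<Rightarrow> 'k) \<Rightarrow>
    nat \<Rightarrow> (nat \<Rightarrow> nat \<Rightarrow> 'c) \<Rightarrow> (nat \<Rightarrow> nat \<Rightarrow> 'c \<Rightarrow> 'k) \<Rightarrow> bool" where
  "has_nonzero_odd_primitive sc D e m cf br \<longleftrightarrow>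
     (\<exists>F\<in>A_set sc D e m cf br. F \<noteq> (\<lambda>_. 0) \<and> is_odd F \<and> is_primitive sc D m cf F)"

definition subcoalg :: "('k::field \<Rightarrow> 'c::comm_ring_1 \<Rightarrow> 'c) \<Rightarrow> ('c \<Rightarrow> ('c \<times> 'c) list) \<Rightarrow> 'c set \<Rightarrow> bool" where
  "subcoalg sc D B \<longleftrightarrow> module.subspace sc B \<and>
     (\<forall>d\<in>B. \<forall>f g. lfun sc f \<longrightarrow> lfun sc g \<longrightarrow> (\<forall>x\<in>B. f x = 0) \<longrightarrow>
        tev f g (D d) = 0 \<and> tev g f (D d) = 0)"

definition simple_subcoalg :: "('k::field \<Rightarrow> 'c::comm_ring_1 \<Rightarrow> 'c) \<Rightarrow> ('c \<Rightarrow> ('c \<times> 'c) list) \<Rightarrow> 'c set \<Rightarrow> bool" where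
  "simple_subcoalg sc D B \<longleftrightarrow> subcoalg sc D B \<and> B \<noteq> {0} \<and>
     (\<forall>E. subcoalg sc D E \<longrightarrow> E \<subseteq> B \<longrightarrow> E = {0} \<or> E = B)"

definition coradical :: "('k::field \<Rightarrow> 'c::comm_ring_1 \<Rightarrow> 'c) \<Rightarrow> ('c \<Rightarrow> ('c \<times> 'c) list) \<Rightarrow> 'c set" where
  "coradical sc D = module.span sc (\<Union>{B. simple_subcoalg sc D B})"

end

theory Submission
  imports Defs "HOL-Library.Function_Algebras"
begin

lemma lfun_lin: "lfun sc f \<Longrightarrow> Vector_Spaces.linear sc (*) f" by (simp add: lfun_def)

lemma lfun_add: "lfun sc f \<Longrightarrow> f (x + y) = f x + f y"
  by (simp add: lfun_def Vector_Spaces.linear_iff)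
lemma lfun_scale: "lfun sc f \<Longrightarrow> f (sc a x) = a * f x"
  by (simp add: lfun_def Vector_Spaces.linear_iff)
lemma lfun_mh: "lfun sc f \<Longrightarrow> module_hom sc (*) f"
  by (simp add: lfun_def module_hom_iff_linear)
lemma lfun_zero: "lfun sc f \<Longrightarrow> f 0 = 0"
  by (drule lfun_mh, rule module_hom.zero) 
lemma lfun_sum: "lfun sc f \<Longrightarrow> f (sum g A) = (\<Sum>a\<in>A. f (g a))"
  by (drule lfun_mh, rule module_hom.sum) 
lemma lfun_diff: "lfun sc f \<Longrightarrow> f (x - y) = f x - f y"
  by (drule lfun_mh, rule module_hom.diff) 
lemma lfun_neg: "lfun sc f \<Longrightarrow> f (- x) = - f x"
  by (drule lfun_mh, rule module_hom.neg) 

lemma tev_Nil[simp]: "tev f g [] = 0" by (simp add: tev_def)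
lemma tev_Cons[simp]: "tev f g (p # t) = f (fst p) * g (snd p) + tev f g t"
  by (simp add: tev_def split_def)
lemma tev_append[simp]: "tev f g (t @ u) = tev f g t + tev f g u"
  by (simp add: tev_def)

lemma vs_field: "Vector_Spaces.vector_space ((*)::'k::field\<Rightarrow>_)"
  by unfold_locales (auto simp: algebra_simps)

lemma lfunI: "Vector_Spaces.vector_space sc \<Longrightarrow> (\<And>x y. f (x+y) = f x + f y) \<Longrightarrow>
   (\<And>a x. f (sc a x) = a * f x) \<Longrightarrow> lfun sc f"
  by (simp add: lfun_def Vector_Spaces.linear_iff vs_field)

lemma sum_upt: "sum_list (map f [0..<m]) = (\<Sum>q<m. f q)"
  by (simp add: interv_sum_list_conv_sum_set_nat atLeast0LessThan)

lemma sum_list_zero: "(\<And>x. x \<in> set xs \<Longrightarrow> f x = 0) \<Longrightarrow> sum_list (map f xs) = (0::'a::monoid_add)"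
  by (induct xs) auto

lemma hpair_Nil[simp]: "hpair [] F = 0" by (simp add: hpair_def)
lemma hpair_Cons[simp]: "hpair (p # xs) F = fst p (F (snd p)) + hpair xs F"
  by (simp add: hpair_def split_def)
lemma hpair_append[simp]: "hpair (xs @ ys) F = hpair xs F + hpair ys F"
  by (simp add: hpair_def)
lemma hpair_concat: "hpair (concat xss) F = sum_list (map (\<lambda>xs. hpair xs F) xss)"
  by (induct xss) auto

lemma teqD: "teq sc t u \<Longrightarrow> lfun sc f \<Longrightarrow> lfun sc g \<Longrightarrow> tev f g t = tev f g u"
  by (simp add: teq_def)

lemma sum_fun_apply: "(sum f A) x = sum (\<lambda>a. f a x) A"
  by (induct A rule: infinite_finite_induct) auto

lemma (in vector_space) subspace_ge_dim:
  assumes U: "subspace U" and UW: "U \<subseteq> W" and WF: "W \<subseteq> span F" and F: "finite F"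
    and d: "dim W \<le> dim U"
  shows "W \<subseteq> U"
proof
  fix v assume vW: "v \<in> W"
  show "v \<in> U"
  proof (rule ccontr)
    assume vU: "v \<notin> U"
    obtain Bu where Bu: "Bu \<subseteq> U" "independent Bu" "U \<subseteq> span Bu" "card Bu = dim U"
      by (rule basis_exists)
    obtain Bw where Bw: "Bw \<subseteq> W" "independent Bw" "W \<subseteq> span Bw" "card Bw = dim W"
      by (rule basis_exists)
    have "Bw \<subseteq> span F" using Bw(1) WF by (rule order_trans)
    from independent_span_bound[OF F Bw(2) this] have fBw: "finite Bw" by (rule conjunct1)
    have "span Bu \<subseteq> U" using Bu(1) U by (rule span_minimal)
    then have "v \<notin> span Bu" using vU by (rule contra_subsetD)
    then have ind: "independent (insert v Bu)" using Bu(2) by (rule independent_insertI)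
    have "U \<subseteq> span Bw" using UW Bw(3) by (rule order_trans)
    have "Bu \<subseteq> span Bw" by (rule order_trans[OF Bu(1) \<open>U \<subseteq> span Bw\<close>])
    moreover have "v \<in> span Bw" using vW Bw(3) by (rule subsetD[rotated])
    ultimately have "insert v Bu \<subseteq> span Bw" by (simp only: insert_subset)
    from independent_span_bound[OF fBw ind this]
    have fin: "finite (insert v Bu)" and cle: "card (insert v Bu) \<le> card Bw" by auto
    have "v \<notin> Bu" using Bu(1) vU by (rule contra_subsetD)
    then have "card (insert v Bu) = Suc (card Bu)"
      using card_insert_disjoint[of Bu v] fin by simp
    then show False using cle Bu(4) Bw(4) d by linarith
  qed
qed

lemma separate:
  assumes vs: "Vector_Spaces.vector_space sc" and d: "d \<noteq> 0"
  shows "\<exists>g. lfun sc g \<and> g d \<noteq> 0"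
proof -
  interpret P: vector_space_pair sc "(*)" using vs vs_field by (simp add: vector_space_pair_def)
  have "P.vs1.independent {d}" using d P.vs1.dependent_single by blast
  then obtain g where "Vector_Spaces.linear sc (*) g" "g d = 1"
    using P.linear_independent_extend[of "{d}" "\<lambda>_. 1"] by auto
  then show ?thesis by (auto simp: lfun_def)
qed

definition vsc :: "'k::field \<Rightarrow> (nat \<Rightarrow> 'k) \<Rightarrow> nat \<Rightarrow> 'k" where
  "vsc a v = (\<lambda>i. a * v i)"

lemma vs_fun: "Vector_Spaces.vector_space (vsc :: 'k::field \<Rightarrow> _)"
  by unfold_locales (auto simp: vsc_def plus_fun_def algebra_simps)

interpretation FV: vector_space "vsc :: 'k::field \<Rightarrow> _" by (rule vs_fun)

lemma vsc_apply[simp]: "vsc a v i = a * v i" by (simp add: vsc_def)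

locale hcb =
  fixes sc :: "'k::field \<Rightarrow> 'c::comm_ring_1 \<Rightarrow> 'c"
    and D :: "'c \<Rightarrow> ('c \<times> 'c) list" and e :: "'c \<Rightarrow> 'k" and S :: "'c \<Rightarrow> 'c"
    and m :: nat and cf :: "nat \<Rightarrow> nat \<Rightarrow> 'c"
  assumes H: "comm_hopf_alg sc D e S" and MC: "mat_comodule sc D e m cf"
begin

lemma vs: "Vector_Spaces.vector_space sc" using H by (simp add: comm_hopf_alg_def)
lemma sc_mul: "sc a (x * y) = sc a x * y" using H by (simp add: comm_hopf_alg_def)
lemma lfun_e: "lfun sc e" using H by (simp add: comm_hopf_alg_def)
lemma e1: "e 1 = 1" using H by (simp add: comm_hopf_alg_def)
lemma lfun_tevD: "lfun sc f \<Longrightarrow> lfun sc g \<Longrightarrow> lfun sc (\<lambda>c. tev f g (D c))"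
  using H by (simp add: comm_hopf_alg_def)
lemma lfun_conv: "lfun sc f \<Longrightarrow> lfun sc g \<Longrightarrow> lfun sc (conv D f g)"
  using lfun_tevD by (simp add: conv_def)
lemma tevD1: "lfun sc f \<Longrightarrow> lfun sc g \<Longrightarrow> tev f g (D 1) = f 1 * g 1"
  using H teqD[of sc "D 1" "[(1,1)]" f g] by (simp add: comm_hopf_alg_def)
lemma tevDcf: "i < m \<Longrightarrow> j < m \<Longrightarrow> lfun sc f \<Longrightarrow> lfun sc g \<Longrightarrow>
   tev f g (D (cf i j)) = (\<Sum>k<m. f (cf i k) * g (cf k j))"
proof -
  assume a: "i < m" "j < m" "lfun sc f" "lfun sc g"
  have "tev f g (D (cf i j)) = tev f g (map (\<lambda>k. (cf i k, cf k j)) [0..<m])"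
    using MC a by (intro teqD) (auto simp: mat_comodule_def)
  also have "\<dots> = (\<Sum>k<m. f (cf i k) * g (cf k j))"
    by (simp add: tev_def comp_def sum_list_sum_nth atLeast0LessThan)
  finally show ?thesis .
qed
lemma ecf: "i < m \<Longrightarrow> j < m \<Longrightarrow> e (cf i j) = (if i = j then 1 else 0)"
  using MC by (simp add: mat_comodule_def)


lemma lfun_mulr: "lfun sc f \<Longrightarrow> lfun sc (\<lambda>x. f (x * y))"
  using vs by (auto simp: lfunI lfun_add lfun_scale distrib_right sc_mul[symmetric])
lemma lfun_mull: "lfun sc f \<Longrightarrow> lfun sc (\<lambda>x. f (y * x))"
  using lfun_mulr[of f y] by (simp add: mult.commute)
lemma lfun_negf: "lfun sc f \<Longrightarrow> lfun sc (\<lambda>x. - f x)"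
  using vs by (auto simp: lfunI lfun_add lfun_scale)
lemma tevD_sc1: "lfun sc f \<Longrightarrow> lfun sc g \<Longrightarrow> tev f g (D (sc t 1)) = t * (f 1 * g 1)"
  using lfun_scale[OF lfun_tevD, of f g t 1] tevD1 by simp
lemma tevD0: "lfun sc f \<Longrightarrow> lfun sc g \<Longrightarrow> tev f g (D 0) = 0"
  using lfun_zero[OF lfun_tevD, of f g] by simp

definition Fw :: "(nat \<Rightarrow> 'k) \<Rightarrow> nat list \<Rightarrow> 'c" where
  "Fw w u = (if length u = 1 \<and> hd u < m then sc (w (hd u)) 1 else 0)"

lemma tev_Fw: "lfun sc f \<Longrightarrow> lfun sc g \<Longrightarrow>
  tev f g (D (Fw w u)) = (if length u = 1 \<and> hd u < m then w (hd u) * (f 1 * g 1) else 0)"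
  by (simp add: Fw_def tevD_sc1 tevD0)

lemma conv_Fw: "lfun sc f \<Longrightarrow> lfun sc g \<Longrightarrow>
  conv D f g (Fw w u) = (if length u = 1 \<and> hd u < m then w (hd u) * (f 1 * g 1) else 0)"
  by (simp add: conv_def tev_Fw)

lemma hp_hmul1: "lfun sc c \<Longrightarrow> lfun sc b \<Longrightarrow> hpair (hmul1 D m cf (c,L) (b,K)) (Fw w) =
   sum_list (map (\<lambda>J. if length J + length K = 1 \<and> hd (J@K) < m
       then w (hd (J@K)) * (c 1 * b (1 * cw cf L J)) else 0) (List.n_lists (length L) [0..<m]))"
  by (simp add: hmul1_def hpair_def comp_def conv_Fw lfun_mulr)

lemma hp_hmul1_0: "lfun sc c \<Longrightarrow> lfun sc b \<Longrightarrow> length L + length K \<noteq> 1 \<Longrightarrow>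
   hpair (hmul1 D m cf (c,L) (b,K)) (Fw w) = 0"
  by (simp add: hp_hmul1, rule sum_list_zero, auto dest: length_n_lists_elem)

lemma hp_hmul1_a: "lfun sc c \<Longrightarrow> lfun sc b \<Longrightarrow>
   hpair (hmul1 D m cf (c,[]) (b,[k])) (Fw w) = (if k < m then w k * (c 1 * b 1) else 0)"
  by (simp add: hp_hmul1 cw_def)

lemma hp_hmul1_b: "lfun sc c \<Longrightarrow> lfun sc b \<Longrightarrow>
   hpair (hmul1 D m cf (c,[l]) (b,[])) (Fw w) = (\<Sum>q<m. w q * (c 1 * b (cf l q)))"
  by (simp add: hp_hmul1 cw_def comp_def sum_upt)

lemma hmul1_elem: "p \<in> set (hmul1 D m cf (a,I) (g,K')) \<Longrightarrow> lfun sc a \<Longrightarrow> lfun sc g \<Longrightarrow>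
   lfun sc (fst p) \<and> length (snd p) = length I + length K'"
  by (auto simp: hmul1_def conv_def lfun_tevD lfun_mulr dest: length_n_lists_elem)

lemma prim_lfun: "b \<in> prim_dual sc e \<Longrightarrow> lfun sc b"
  by (simp add: prim_dual_def fin_dual_def)
lemma prim_1: "b \<in> prim_dual sc e \<Longrightarrow> b 1 = 0"
proof -
  assume "b \<in> prim_dual sc e"
  then have "\<forall>x y. b (x * y) = b x * e y + e x * b y" by (simp add: prim_dual_def)
  then have "b (1 * 1) = b 1 * e 1 + e 1 * b 1" by blast
  then have "b 1 = b 1 + b 1" by (simp add: e1)
  then show ?thesis by (metis add_cancel_right_right)
qed
lemma fin_lfun: "a \<in> fin_dual sc \<Longrightarrow> lfun sc a"
  by (simp add: fin_dual_def)

lemma Fw_A_set: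
  assumes brp: "\<forall>i<m. \<forall>j<m. br i j \<in> prim_dual sc e"
    and inv: "\<forall>i<m. (\<Sum>j<m. sc (w j) (cf i j)) = sc (w i) 1"
  shows "Fw w \<in> A_set sc D e m cf br"
  unfolding A_set_def
proof (intro CollectI conjI allI ballI impI)
  fix u :: "nat list" assume "\<not> set u \<subseteq> {..<m}"
  then show "Fw w u = 0" by (cases u) (auto simp: Fw_def)
next
  fix a b I K i j
  assume a: "a \<in> fin_dual sc" and b: "b \<in> fin_dual sc" and sI: "set I \<subseteq> {..<m}"
    and sK: "set K \<subseteq> {..<m}" and ij: "i < m" "j < m"
  have la: "lfun sc a" and lb: "lfun sc b" using a b by (auto simp: fin_lfun)
  have lbr: "lfun sc (br i j)" and br1: "br i j 1 = 0" using brp ij by (auto simp: prim_lfun prim_1)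
  have lnbr: "lfun sc (\<lambda>c. - br i j c)" using lfun_negf[OF lbr] .
  define X1 where "X1 = hmul1 D m cf (a,I) (e,[i,j])"
  define X2 where "X2 = hmul1 D m cf (a,I) (e,[j,i])"
  define X3 where "X3 = hmul1 D m cf (a,I) (\<lambda>c. - br i j c,[])"
  have eq: "hmul D m cf (hmul D m cf [(a, I)] (hgen e br i j)) [(b, K)] =
     concat (map (\<lambda>p. hmul1 D m cf p (b,K)) (X1 @ X2 @ X3))"
    by (simp add: hmul_def hgen_def X1_def X2_def X3_def)
  have z12: "hpair (hmul1 D m cf p (b,K)) (Fw w) = 0" if "p \<in> set (X1 @ X2)" for p
  proof -
    have "lfun sc (fst p) \<and> length (snd p) = length I + 2"
      using that hmul1_elem[of p a I e "[i,j]"] hmul1_elem[of p a I e "[j,i]"] la lfun_e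
      by (auto simp: X1_def X2_def)
    then show ?thesis using hp_hmul1_0[of "fst p" b "snd p" K w] lb
      by (cases p) auto
  qed
  have "hpair (hmul D m cf (hmul D m cf [(a, I)] (hgen e br i j)) [(b, K)]) (Fw w) =
     sum_list (map (\<lambda>p. hpair (hmul1 D m cf p (b,K)) (Fw w)) (X1 @ X2)) +
     sum_list (map (\<lambda>p. hpair (hmul1 D m cf p (b,K)) (Fw w)) X3)"
    unfolding eq hpair_concat by (simp add: comp_def)
  also have "sum_list (map (\<lambda>p. hpair (hmul1 D m cf p (b,K)) (Fw w)) (X1 @ X2)) = 0"
    by (rule sum_list_zero) (rule z12)
  also have "sum_list (map (\<lambda>p. hpair (hmul1 D m cf p (b,K)) (Fw w)) X3) = 0"
  proof (cases "length I + length K = 1")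
    case False
    show ?thesis
    proof (rule sum_list_zero)
      fix p assume "p \<in> set X3"
      then have "lfun sc (fst p) \<and> length (snd p) = length I"
        using hmul1_elem[of p a I "\<lambda>c. - br i j c" "[]"] la lnbr by (auto simp: X3_def)
      then show "hpair (hmul1 D m cf p (b,K)) (Fw w) = 0"
        using hp_hmul1_0[of "fst p" b "snd p" K w] lb False by (cases p) auto
    qed
  next
    case True
    then consider "I = []" "length K = 1" | "length I = 1" "K = []" by (cases I) auto
    then show ?thesis
    proof cases
      case 1
      then obtain k where K: "K = [k]" by (cases K) auto
      define c where "c = conv D a (\<lambda>x. - br i j (x * 1))"
      have X3e: "X3 = [(c, [])]" by (simp add: X3_def hmul1_def 1 cw_def c_def)
      have lc: "lfun sc c" unfolding c_def using lfun_conv[OF la lnbr] by simp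
      have "c 1 = 0" using br1 by (simp add: c_def conv_def tevD1[OF la lnbr])
      then show ?thesis using hp_hmul1_a[OF lc lb, of k w] by (simp add: X3e K)
    next
      case 2
      then obtain p where I: "I = [p]" by (cases I) auto
      have pm: "p < m" using sI I by simp
      define c where "c q = conv D a (\<lambda>x. - br i j (x * cf p q))" for q
      have X3e: "X3 = map (\<lambda>q. (c q, [q])) [0..<m]"
        by (simp add: X3_def hmul1_def I cw_def c_def comp_def)
      have lc: "lfun sc (c q)" for q unfolding c_def using lfun_conv la lfun_mulr[OF lnbr] by simp
      have c1: "c q 1 = - (a 1 * br i j (cf p q))" for q
        using lfun_mulr[OF lnbr] by (simp add: c_def conv_def tevD1 la)
      have "sum_list (map (\<lambda>p. hpair (hmul1 D m cf p (b,K)) (Fw w)) X3) =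
         (\<Sum>q<m. \<Sum>q'<m. w q' * (c q 1 * b (cf q q')))"
        by (simp add: X3e comp_def sum_upt 2 hp_hmul1_b[OF lc lb])
      also have "\<dots> = (\<Sum>q<m. c q 1 * b (\<Sum>q'<m. sc (w q') (cf q q')))"
        by (simp add: lfun_sum[OF lb] lfun_scale[OF lb] sum_distrib_left mult.left_commute)
      also have "\<dots> = (\<Sum>q<m. c q 1 * (w q * b 1))"
        using inv by (simp add: lfun_scale[OF lb])
      also have "\<dots> = - (a 1 * b 1) * br i j (\<Sum>q<m. sc (w q) (cf p q))"
        by (simp add: c1 lfun_sum[OF lbr] lfun_scale[OF lbr] sum_distrib_left sum_negf algebra_simps)
      also have "\<dots> = 0" using inv pm br1 by (simp add: lfun_scale[OF lbr])
      finally show ?thesis .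
    qed
  qed
  finally show "hpair (hmul D m cf (hmul D m cf [(a, I)] (hgen e br i j)) [(b, K)]) (Fw w) = 0"
    by simp
qed

lemma tev_map_mul: "tev f g (map (\<lambda>(x, y). (x, c * y)) t) = tev f (\<lambda>y. g (c * y)) t"
  by (induct t) auto

lemma tev_concat: "tev f g (concat ts) = sum_list (map (tev f g) ts)"
  by (induct ts) auto

lemma tev_Acop: "lfun sc f \<Longrightarrow> lfun sc g \<Longrightarrow> tev f g (Acop D m cf (Fw w) I Q) =
  sum_list (map (\<lambda>P. if length P + length Q = 1 \<and> hd (P @ Q) < m
     then w (hd (P @ Q)) * (f 1 * g (cw cf I P)) else 0) (List.n_lists (length I) [0..<m]))"
proof -
  assume lf: "lfun sc f" and lg: "lfun sc g"
  have "tev f g (Acop D m cf (Fw w) I Q) = sum_list (map (\<lambda>P. tev f (\<lambda>y. g (cw cf I P * y)) (D (Fw w (P @ Q))))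
     (List.n_lists (length I) [0..<m]))"
    unfolding Acop_def by (simp add: tev_concat comp_def tev_map_mul)
  also have "\<dots> = sum_list (map (\<lambda>P. if length P + length Q = 1 \<and> hd (P @ Q) < m
     then w (hd (P @ Q)) * (f 1 * g (cw cf I P * 1)) else 0) (List.n_lists (length I) [0..<m]))"
    by (intro arg_cong[where f=sum_list] map_cong refl) (simp add: tev_Fw lf lfun_mull[OF lg])
  finally show ?thesis by (simp cong: if_cong)
qed

lemma Fw_prim:
  assumes inv: "\<forall>i<m. (\<Sum>j<m. sc (w j) (cf i j)) = sc (w i) 1"
  shows "is_primitive sc D m cf (Fw w)"
  unfolding is_primitive_def teq_def
proof (intro allI impI)
  fix I Q f g
  assume sI: "set I \<subseteq> {..<m}" and sQ: "set Q \<subseteq> {..<m}" and lf: "lfun sc f" and lg: "lfun sc g"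
  show "tev f g (Acop D m cf (Fw w) I Q) =
       tev f g ((if Q = [] then [(Fw w I, 1)] else []) @ (if I = [] then [(1, Fw w Q)] else []))"
  proof (cases "length I + length Q = 1")
    case False
    have "tev f g (Acop D m cf (Fw w) I Q) = 0"
      by (simp add: tev_Acop lf lg, rule sum_list_zero, use False in \<open>force dest: length_n_lists_elem\<close>)
    moreover have "Q = [] \<Longrightarrow> Fw w I = 0" "I = [] \<Longrightarrow> Fw w Q = 0" using False by (auto simp: Fw_def)
    moreover have "f 0 = 0" "g 0 = 0" using lf lg by (auto simp: lfun_zero)
    ultimately show ?thesis by auto
  next
    case True
    then consider "I = []" "length Q = 1" | "length I = 1" "Q = []" by (cases I) auto
    then show ?thesis
    proof cases
      case 1
      then obtain q where Q: "Q = [q]" by (cases Q) auto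
      have qm: "q < m" using sQ Q by simp
      show ?thesis using qm by (simp add: tev_Acop lf lg 1 Q cw_def Fw_def lfun_scale)
    next
      case 2
      then obtain p where I: "I = [p]" by (cases I) auto
      have pm: "p < m" using sI I by simp
      have "tev f g (Acop D m cf (Fw w) I Q) = (\<Sum>q<m. w q * (f 1 * g (cf p q)))"
        by (simp add: tev_Acop lf lg 2 I cw_def comp_def sum_upt)
      also have "\<dots> = f 1 * g (\<Sum>q<m. sc (w q) (cf p q))"
        by (simp add: lfun_sum[OF lg] lfun_scale[OF lg] sum_distrib_left mult.left_commute)
      also have "\<dots> = f 1 * g (sc (w p) 1)" using inv pm by simp
      finally show ?thesis using pm by (simp add: I 2 Fw_def lfun_scale lf lg)
    qed
  qed
qed

lemma part1:
  assumes brp: "\<forall>i<m. \<forall>j<m. br i j \<in> prim_dual sc e"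
    and inv: "\<forall>i<m. (\<Sum>j<m. sc (w j) (cf i j)) = sc (w i) 1"
    and nz: "\<exists>j<m. w j \<noteq> 0"
  shows "has_nonzero_odd_primitive sc D e m cf br"
  unfolding has_nonzero_odd_primitive_def
proof (intro bexI conjI)
  show "Fw w \<in> A_set sc D e m cf br" by (rule Fw_A_set[OF brp inv])
  show "is_primitive sc D m cf (Fw w)" by (rule Fw_prim[OF inv])
  show "is_odd (Fw w)" by (auto simp: is_odd_def Fw_def)
  obtain j where j: "j < m" "w j \<noteq> 0" using nz by blast
  interpret C: vector_space sc by (rule vs)
  have "Fw w [j] \<noteq> 0" using j by (simp add: Fw_def)
  then show "Fw w \<noteq> (\<lambda>_. 0)" by metis
qed

sublocale C: vector_space sc by (rule vs)

definition Mv :: "('c \<Rightarrow> 'k) \<Rightarrow> (nat \<Rightarrow> 'k) \<Rightarrow> nat \<Rightarrow> 'k" where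
  "Mv g v = (\<lambda>k. if k < m then (\<Sum>j<m. g (cf k j) * v j) else 0)"

definition Sup :: "(nat \<Rightarrow> 'k) set" where "Sup = {v. \<forall>i\<ge>m. v i = 0}"

definition Inv :: "(nat \<Rightarrow> 'k) set \<Rightarrow> bool" where
  "Inv U \<longleftrightarrow> FV.subspace U \<and> U \<subseteq> Sup \<and> (\<forall>g v. lfun sc g \<longrightarrow> v \<in> U \<longrightarrow> Mv g v \<in> U)"

lemma Mv_Sup: "Mv g v \<in> Sup" by (simp add: Mv_def Sup_def)

lemma Mv_addv: "Mv g (u + v) = Mv g u + Mv g v"
  by (rule ext) (simp add: Mv_def distrib_left sum.distrib)
lemma Mv_scalev: "Mv g (vsc a v) = vsc a (Mv g v)"
  by (rule ext) (simp add: Mv_def sum_distrib_left mult.left_commute)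
lemma Mv_0v: "Mv g 0 = 0"
  by (rule ext) (simp add: Mv_def)
lemma Mv_addf: "Mv (\<lambda>c. f c + g c) v = Mv f v + Mv g v"
  by (rule ext) (simp add: Mv_def distrib_right sum.distrib)
lemma Mv_scalef: "Mv (\<lambda>c. a * f c) v = vsc a (Mv f v)"
  by (rule ext) (simp add: Mv_def sum_distrib_left mult.assoc)
lemma Mv_0f: "Mv (\<lambda>c. 0) v = 0"
  by (rule ext) (simp add: Mv_def)
lemma Mv_conv: "lfun sc f \<Longrightarrow> lfun sc g \<Longrightarrow> Mv (conv D f g) v = Mv f (Mv g v)"
proof (rule ext)
  fix k assume lf: "lfun sc f" and lg: "lfun sc g"
  show "Mv (conv D f g) v k = Mv f (Mv g v) k"
  proof (cases "k < m")
    case True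
    have "Mv (conv D f g) v k = (\<Sum>j<m. (\<Sum>l<m. f (cf k l) * g (cf l j)) * v j)"
      using True by (simp add: Mv_def conv_def tevDcf lf lg)
    also have "\<dots> = (\<Sum>j<m. \<Sum>l<m. f (cf k l) * (g (cf l j) * v j))"
      by (simp add: sum_distrib_right mult.assoc)
    also have "\<dots> = (\<Sum>l<m. \<Sum>j<m. f (cf k l) * (g (cf l j) * v j))"
      by (rule sum.swap)
    also have "\<dots> = (\<Sum>l<m. f (cf k l) * (\<Sum>j<m. g (cf l j) * v j))"
      by (simp add: sum_distrib_left)
    also have "\<dots> = Mv f (Mv g v) k" using True by (simp add: Mv_def)
    finally show ?thesis .
  qed (simp add: Mv_def)
qed
lemma Mv_e: "v \<in> Sup \<Longrightarrow> Mv e v = v"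
proof (rule ext)
  fix k assume v: "v \<in> Sup"
  show "Mv e v k = v k"
  proof (cases "k < m")
    case True
    then have "Mv e v k = (\<Sum>j<m. (if k = j then 1 else 0) * v j)"
      by (simp add: Mv_def ecf)
    also have "\<dots> = (\<Sum>j<m. (if k = j then v j else 0))"
      by (rule sum.cong) auto
    also have "\<dots> = v k" using True by (simp add: sum.delta)
    finally show ?thesis .
  qed (use v in \<open>simp add: Mv_def Sup_def\<close>)
qed
lemma conv_1: "lfun sc f \<Longrightarrow> lfun sc g \<Longrightarrow> conv D f g 1 = f 1 * g 1"
  by (simp add: conv_def tevD1)

lemma lfun_addf: "lfun sc f \<Longrightarrow> lfun sc g \<Longrightarrow> lfun sc (\<lambda>c. f c + g c)"
  using vs by (auto intro!: lfunI simp: lfun_add lfun_scale algebra_simps)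
lemma lfun_scalef: "lfun sc f \<Longrightarrow> lfun sc (\<lambda>c. a * f c)"
  using vs by (auto intro!: lfunI simp: lfun_add lfun_scale algebra_simps)
lemma lfun_0f: "lfun sc (\<lambda>c. 0)"
  using vs by (auto intro!: lfunI)

lemma Inv_img:
  assumes P0: "P (\<lambda>c. 0)" and Padd: "\<And>f g. P f \<Longrightarrow> P g \<Longrightarrow> P (\<lambda>c. f c + g c)"
    and Psc: "\<And>f a. P f \<Longrightarrow> P (\<lambda>c. a * f c)"
    and Pconv: "\<And>f h. lfun sc h \<Longrightarrow> P f \<Longrightarrow> P (conv D h f)"
    and Plf: "\<And>f. P f \<Longrightarrow> lfun sc f"
  shows "Inv {Mv f x | f. P f}"
  unfolding Inv_def
proof (intro conjI allI impI)
  show "FV.subspace {Mv f x | f. P f}"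
  proof (rule FV.subspaceI)
    have "Mv (\<lambda>c. 0) x = 0" by (rule Mv_0f)
    then show "0 \<in> {Mv f x | f. P f}" using P0 by force
    fix u v assume "u \<in> {Mv f x | f. P f}" "v \<in> {Mv f x | f. P f}"
    then obtain f g where "u = Mv f x" "v = Mv g x" "P f" "P g" by blast
    then have "u + v = Mv (\<lambda>c. f c + g c) x" "P (\<lambda>c. f c + g c)" using Padd by (simp_all add: Mv_addf)
    then show "u + v \<in> {Mv f x | f. P f}" by blast
  next
    fix c u assume "u \<in> {Mv f x | f. P f}"
    then obtain f where "u = Mv f x" "P f" by blast
    then have "vsc c u = Mv (\<lambda>d. c * f d) x" "P (\<lambda>d. c * f d)" using Psc by (simp_all add: Mv_scalef)
    then show "vsc c u \<in> {Mv f x | f. P f}" by blast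
  qed
  show "{Mv f x | f. P f} \<subseteq> Sup" using Mv_Sup by blast
  fix g v assume lg: "lfun sc g" and "v \<in> {Mv f x | f. P f}"
  then obtain f where "v = Mv f x" "P f" by blast
  then have "Mv g v = Mv (conv D g f) x" "P (conv D g f)" using Pconv[OF lg] Mv_conv[OF lg Plf] by simp_all
  then show "Mv g v \<in> {Mv f x | f. P f}" by blast
qed

lemma eig_ind:
  assumes V0: "Inv V0" and sim: "\<And>U. Inv U \<Longrightarrow> U \<subseteq> V0 \<Longrightarrow> U \<noteq> {0} \<Longrightarrow> U = V0"
  shows "set xs \<subseteq> V0 \<Longrightarrow> set ys \<subseteq> V0 \<Longrightarrow>
    (\<forall>f. lfun sc f \<longrightarrow> (\<forall>x\<in>set xs. Mv f x = 0) \<longrightarrow> (\<forall>y\<in>set ys. Mv f y = 0) \<longrightarrow> f 1 = 0) \<Longrightarrow>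
    (\<exists>f. lfun sc f \<and> (\<forall>y\<in>set ys. Mv f y = 0) \<and> f 1 \<noteq> 0) \<Longrightarrow>
    \<exists>u\<in>V0. u \<noteq> 0 \<and> (\<forall>g. lfun sc g \<longrightarrow> Mv g u = vsc (g 1) u)"
proof (induction xs arbitrary: ys)
  case Nil
  then show ?case by auto
next
  case (Cons x xs)
  show ?case
  proof (cases "\<exists>f. lfun sc f \<and> (\<forall>y\<in>set (x # ys). Mv f y = 0) \<and> f 1 \<noteq> 0")
    case True
    show ?thesis
    proof (rule Cons.IH[of "x # ys"])
      show "set xs \<subseteq> V0" using Cons.prems(1) by simp
      show "set (x # ys) \<subseteq> V0" using Cons.prems(1,2) by simp
      show "\<forall>f. lfun sc f \<longrightarrow> (\<forall>x\<in>set xs. Mv f x = 0) \<longrightarrow> (\<forall>y\<in>set (x # ys). Mv f y = 0) \<longrightarrow> f 1 = 0"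
      proof (intro allI impI)
        fix f assume "lfun sc f" "\<forall>x\<in>set xs. Mv f x = 0" "\<forall>y\<in>set (x # ys). Mv f y = 0"
        then show "f 1 = 0" using Cons.prems(3)[rule_format, of f] by auto
      qed
      show "\<exists>f. lfun sc f \<and> (\<forall>y\<in>set (x # ys). Mv f y = 0) \<and> f 1 \<noteq> 0" by (rule True)
    qed
  next
    case False
    define inL where "inL f \<longleftrightarrow> lfun sc f \<and> (\<forall>y\<in>set ys. Mv f y = 0)" for f
    have B: "inL f \<Longrightarrow> Mv f x = 0 \<Longrightarrow> f 1 = 0" for f using False by (auto simp: inL_def)
    obtain f0 where f0: "inL f0" "f0 1 \<noteq> 0" using Cons.prems(4) unfolding inL_def by blast
    have xV: "x \<in> V0" using Cons.prems(1) by simp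
    have L0: "inL (\<lambda>c. 0)" by (simp add: inL_def lfun_0f Mv_0f)
    have Ladd: "inL (\<lambda>c. f c + g c)" if "inL f" "inL g" for f g
      using that by (simp add: inL_def lfun_addf Mv_addf)
    have Lsc: "inL (\<lambda>c. a * f c)" if "inL f" for f a
      using that by (simp add: inL_def lfun_scalef Mv_scalef vsc_def zero_fun_def)
    have Lconv: "inL (conv D h f)" if "lfun sc h" "inL f" for f h
      using that by (simp add: inL_def lfun_conv Mv_conv Mv_0v)
    define U where "U = {Mv f x | f. inL f}"
    define K where "K = {Mv f x | f. inL f \<and> f 1 = 0}"
    have lL: "inL f \<Longrightarrow> lfun sc f" for f by (simp add: inL_def)
    have IU: "Inv U" unfolding U_def
      by (rule Inv_img) (rule L0, erule (1) Ladd, erule Lsc, erule (1) Lconv, erule lL)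
    have IK: "Inv K" unfolding K_def
    proof (rule Inv_img)
      show "inL (\<lambda>c. 0) \<and> 0 = (0::'k)" using L0 by simp
      show "inL (\<lambda>c. f c + g c) \<and> f 1 + g 1 = 0" if "inL f \<and> f 1 = 0" "inL g \<and> g 1 = 0" for f g
        using that Ladd by simp
      show "inL (\<lambda>c. a * f c) \<and> a * f 1 = 0" if "inL f \<and> f 1 = 0" for f a
        using that Lsc by simp
      show "inL (conv D h f) \<and> conv D h f 1 = 0" if "lfun sc h" "inL f \<and> f 1 = 0" for f h
        using that Lconv conv_1[OF that(1) lL] by simp
      show "lfun sc f" if "inL f \<and> f 1 = 0" for f using that lL by simp
    qed
    have UV: "U \<subseteq> V0" using V0 xV by (auto simp: U_def Inv_def inL_def)
    define u where "u = Mv f0 x"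
    have u0: "u \<noteq> 0" using B f0 by (auto simp: u_def)
    have "u \<in> U" using f0 by (auto simp: U_def u_def)
    then have "U \<noteq> {0}" using u0 by blast
    then have UV0: "U = V0" using sim IU UV by blast
    have uK: "u \<notin> K"
    proof
      assume "u \<in> K"
      then obtain f where f: "inL f" "f 1 = 0" "Mv f0 x = Mv f x" by (auto simp: K_def u_def)
      have "inL (\<lambda>c. f0 c + (-1) * f c)" using Ladd Lsc f0 f by blast
      moreover have "Mv (\<lambda>c. f0 c + (-1) * f c) x = Mv f0 x + vsc (-1) (Mv f x)"
        by (simp only: Mv_addf Mv_scalef)
      moreover have "Mv f0 x + vsc (-1) (Mv f x) = 0" using f(3) by (simp add: fun_eq_iff)
      ultimately have "f0 1 + (-1) * f 1 = 0" using B by metis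
      then show False using f f0 by simp
    qed
    have KV: "K \<subseteq> V0" using UV by (auto simp: K_def U_def)
    have K0: "K = {0}"
    proof (rule ccontr)
      assume "K \<noteq> {0}"
      then have "K = V0" using sim IK KV by blast
      then show False using uK \<open>u \<in> U\<close> UV0 by blast
    qed
    show ?thesis
    proof (intro bexI conjI allI impI)
      show "u \<noteq> 0" by (rule u0)
      show "u \<in> V0" using \<open>u \<in> U\<close> UV by blast
      fix g assume lg: "lfun sc g"
      define h where "h = (\<lambda>c. conv D g f0 c + (- g 1) * f0 c)"
      have "inL h" unfolding h_def using Ladd Lsc Lconv lg f0 by blast
      moreover have "h 1 = 0" using lg f0 by (simp add: h_def conv_1 inL_def)
      ultimately have "Mv h x \<in> K" by (auto simp: K_def)
      then have "Mv h x = 0" using K0 by blast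
      moreover have "Mv h x = Mv g u + vsc (- g 1) u"
        unfolding h_def u_def using Mv_conv[OF lg lL[OF f0(1)]] by (simp only: Mv_addf Mv_scalef)
      ultimately have "Mv g u + vsc (- g 1) u = 0" by simp
      then show "Mv g u = vsc (g 1) u"
        by (simp add: fun_eq_iff vsc_def)
    qed
  qed
qed

definition dl :: "nat \<Rightarrow> nat \<Rightarrow> 'k" where "dl i = (\<lambda>k. if k = i then 1 else 0)"

lemma Sup_span: "Sup \<subseteq> FV.span (dl ` {..<m})"
proof
  fix v assume v: "v \<in> Sup"
  have "v = (\<Sum>i<m. vsc (v i) (dl i))"
  proof (rule ext)
    fix k
    have "(\<Sum>i<m. vsc (v i) (dl i)) k = (\<Sum>i<m. if i = k then v i else 0)"
      by (simp add: sum_fun_apply dl_def if_distrib cong: if_cong)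
    also have "\<dots> = v k" using v by (auto simp: sum.delta Sup_def)
    finally show "v k = (\<Sum>i<m. vsc (v i) (dl i)) k" by simp
  qed
  also have "\<dots> \<in> FV.span (dl ` {..<m})"
    by (intro FV.span_sum FV.span_scale FV.span_base) auto
  finally show "v \<in> FV.span (dl ` {..<m})" .
qed

lemma Inv_Sup: "Inv Sup"
  unfolding Inv_def
proof (intro conjI allI impI)
  show "FV.subspace Sup" by (rule FV.subspaceI) (auto simp: Sup_def)
qed (auto simp: Mv_Sup)

definition cc :: "nat \<Rightarrow> (nat \<Rightarrow> 'k) \<Rightarrow> 'c" where
  "cc i v = (\<Sum>j<m. sc (v j) (cf i j))"

lemma f_cc: "lfun sc f \<Longrightarrow> i < m \<Longrightarrow> f (cc i v) = Mv f v i"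
  by (simp add: cc_def Mv_def lfun_sum lfun_scale mult.commute)

lemma lfun_kernel: "lfun sc f \<Longrightarrow> C.subspace {d. f d = 0}"
  by (rule C.subspaceI) (auto simp: lfun_zero lfun_add lfun_scale)

lemma tev_cc: "lfun sc f \<Longrightarrow> lfun sc g \<Longrightarrow> i < m \<Longrightarrow> tev f g (D (cc i v)) = f (cc i (Mv g v))"
proof -
  assume lf: "lfun sc f" and lg: "lfun sc g" and i: "i < m"
  have "tev f g (D (cc i v)) = (\<Sum>j<m. v j * (\<Sum>k<m. f (cf i k) * g (cf k j)))"
    unfolding cc_def using i
    by (simp add: lfun_sum[OF lfun_tevD[OF lf lg]] lfun_scale[OF lfun_tevD[OF lf lg]] tevDcf lf lg)
  also have "\<dots> = (\<Sum>j<m. \<Sum>k<m. f (cf i k) * (g (cf k j) * v j))"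
    by (simp add: sum_distrib_left mult.commute mult.left_commute)
  also have "\<dots> = (\<Sum>k<m. \<Sum>j<m. f (cf i k) * (g (cf k j) * v j))"
    by (rule sum.swap)
  also have "\<dots> = f (cc i (Mv g v))"
    unfolding cc_def by (simp add: lfun_sum[OF lf] lfun_scale[OF lf] Mv_def sum_distrib_left sum_distrib_right mult.commute mult.left_commute)
  finally show ?thesis .
qed

lemma cc_0: "cc i 0 = 0"
  by (simp add: cc_def)

lemma part2:
  assumes cor: "coradical sc D = range (\<lambda>a. sc a 1)" and m0: "m > 0"
  shows "\<exists>w. (\<exists>j<m. w j \<noteq> 0) \<and> (\<forall>i<m. (\<Sum>j<m. sc (w j) (cf i j)) = sc (w i) 1)"
proof -
  have finF: "finite (dl ` {..<m})" by simp
  define P where "P n \<longleftrightarrow> (\<exists>U. Inv U \<and> U \<noteq> {0} \<and> FV.dim U = n)" for n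
  have "dl 0 \<in> Sup" "dl 0 \<noteq> 0" using m0 by (auto simp: Sup_def dl_def fun_eq_iff)
  then have "Sup \<noteq> {0}" by blast
  then have "P (FV.dim Sup)" using Inv_Sup by (auto simp: P_def)
  then have "P (LEAST n. P n)" by (rule LeastI)
  then obtain V0 where V0: "Inv V0" "V0 \<noteq> {0}" "FV.dim V0 = (LEAST n. P n)" by (auto simp: P_def)
  have mindim: "FV.dim V0 \<le> FV.dim U" if "Inv U" "U \<noteq> {0}" for U
    using V0(3) that by (auto simp: P_def intro: Least_le)
  have sim: "U = V0" if "Inv U" "U \<subseteq> V0" "U \<noteq> {0}" for U
  proof
    show "U \<subseteq> V0" by fact
    show "V0 \<subseteq> U"
    proof (rule FV.subspace_ge_dim[OF _ _ _ finF])
      show "FV.subspace U" using that by (simp add: Inv_def)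
      show "U \<subseteq> V0" by fact
      show "V0 \<subseteq> FV.span (dl ` {..<m})" using V0(1) Sup_span by (auto simp: Inv_def)
      show "FV.dim V0 \<le> FV.dim U" using mindim that by blast
    qed
  qed
  define G where "G = {cc i v | i v. i < m \<and> v \<in> V0}"
  define B where "B = C.span G"
  define F2 where "F2 = (\<lambda>p. cf (fst p) (snd p)) ` ({..<m} \<times> {..<m})"
  have finF2: "finite F2" by (simp add: F2_def)
  have GF2: "G \<subseteq> C.span F2"
  proof
    fix d assume "d \<in> G"
    then obtain i v where d: "d = cc i v" "i < m" by (auto simp: G_def)
    show "d \<in> C.span F2" unfolding d cc_def
    proof (intro C.span_sum C.span_scale C.span_base)
      fix j assume "j \<in> {..<m}"
      then have "(i, j) \<in> {..<m} \<times> {..<m}" using d by simp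
      then show "cf i j \<in> F2" unfolding F2_def by (rule rev_image_eqI) simp
    qed
  qed
  have BF2: "B \<subseteq> C.span F2" unfolding B_def by (rule C.span_minimal[OF GF2 C.subspace_span])
  have GB: "G \<subseteq> B" unfolding B_def by (rule C.span_superset)
  have subB: "subcoalg sc D B"
    unfolding subcoalg_def
  proof (intro conjI ballI allI impI)
    show "C.subspace B" unfolding B_def by (rule C.subspace_span)
    fix d f g assume dB: "d \<in> B" and lf: "lfun sc f" and lg: "lfun sc g" and fz: "\<forall>x\<in>B. f x = 0"
    have "G \<subseteq> {d. tev f g (D d) = 0}"
    proof
      fix d assume "d \<in> G"
      then obtain i v where d: "d = cc i v" "i < m" "v \<in> V0" by (auto simp: G_def)
      have "Mv g v \<in> V0" using V0(1) d lg by (auto simp: Inv_def)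
      then have "cc i (Mv g v) \<in> B" using GB d by (auto simp: G_def)
      then show "d \<in> {d. tev f g (D d) = 0}" using fz by (simp add: d tev_cc lf lg)
    qed
    then have "B \<subseteq> {d. tev f g (D d) = 0}" unfolding B_def
      by (rule C.span_minimal[OF _ lfun_kernel[OF lfun_tevD[OF lf lg]]])
    then show "tev f g (D d) = 0" using dB by blast
    have "G \<subseteq> {d. tev g f (D d) = 0}"
    proof
      fix d assume "d \<in> G"
      then obtain i v where d: "d = cc i v" "i < m" "v \<in> V0" by (auto simp: G_def)
      have "Mv f v = 0"
      proof (rule ext)
        fix k show "Mv f v k = 0 k"
        proof (cases "k < m")
          case True
          then have "cc k v \<in> B" using GB d by (auto simp: G_def)
          then have "f (cc k v) = 0" using fz by blast
          then show ?thesis using f_cc[OF lf True, of v] by simp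
        qed (simp add: Mv_def)
      qed
      then show "d \<in> {d. tev g f (D d) = 0}" by (simp add: d tev_cc lf lg cc_0 lfun_zero[OF lg])
    qed
    then have "B \<subseteq> {d. tev g f (D d) = 0}" unfolding B_def
      by (rule C.span_minimal[OF _ lfun_kernel[OF lfun_tevD[OF lg lf]]])
    then show "tev g f (D d) = 0" using dB by blast
  qed
  have Bne: "B \<noteq> {0}"
  proof -
    obtain v where v: "v \<in> V0" "v \<noteq> 0" using V0(2) V0(1) unfolding Inv_def FV.subspace_def by blast
    have vS: "v \<in> Sup" using v V0(1) by (auto simp: Inv_def)
    obtain i where vi: "v i \<noteq> 0" using v(2) by (auto simp: fun_eq_iff)
    have im: "i < m"
    proof (rule ccontr)
      assume "\<not> i < m"
      then have "v i = 0" using vS unfolding Sup_def by simp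
      then show False using vi by simp
    qed
    have "e (cc i v) = v i" using f_cc[OF lfun_e im, of v] Mv_e[OF vS] by simp
    then have "cc i v \<noteq> 0" using vi lfun_zero[OF lfun_e] by auto
    moreover have "cc i v \<in> B" using GB v im by (auto simp: G_def)
    ultimately show ?thesis by blast
  qed
  define Q where "Q n \<longleftrightarrow> (\<exists>E. subcoalg sc D E \<and> E \<subseteq> B \<and> E \<noteq> {0} \<and> C.dim E = n)" for n
  have "Q (C.dim B)" using subB Bne by (auto simp: Q_def)
  then have "Q (LEAST n. Q n)" by (rule LeastI)
  then obtain B0 where B0: "subcoalg sc D B0" "B0 \<subseteq> B" "B0 \<noteq> {0}" "C.dim B0 = (LEAST n. Q n)"
    by (auto simp: Q_def)
  have B0sub: "C.subspace B0" using B0(1) by (simp add: subcoalg_def)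
  have simpB0: "simple_subcoalg sc D B0"
    unfolding simple_subcoalg_def
  proof (intro conjI allI impI)
    show "subcoalg sc D B0" "B0 \<noteq> {0}" by (fact B0(1), fact B0(3))
    fix E assume E: "subcoalg sc D E" "E \<subseteq> B0"
    show "E = {0} \<or> E = B0"
    proof (cases "E = {0}")
      case False
      have "E \<subseteq> B" using E(2) B0(2) by blast
      then have "Q (C.dim E)" unfolding Q_def using E(1) False by blast
      then have dle: "C.dim B0 \<le> C.dim E" using B0(4) by (simp add: Least_le)
      have "B0 \<subseteq> E"
      proof (rule C.subspace_ge_dim[OF _ E(2) _ finF2 dle])
        show "C.subspace E" using E(1) by (simp add: subcoalg_def)
        show "B0 \<subseteq> C.span F2" using B0(2) BF2 by blast
      qed
      then show ?thesis using E(2) by blast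
    qed simp
  qed
  have "B0 \<subseteq> \<Union>{B. simple_subcoalg sc D B}" using simpB0 by (rule Union_upper[OF CollectI])
  then have "B0 \<subseteq> coradical sc D"
    unfolding coradical_def using C.span_superset by (rule order_trans)
  then have B0r: "B0 \<subseteq> range (\<lambda>a. sc a 1)" using cor by simp
  have "0 \<in> B0" using B0sub by (rule C.subspace_0)
  then obtain d where d: "d \<in> B0" "d \<noteq> 0" using B0(3) by blast
  then obtain a where a: "d = sc a 1" using B0r by blast
  have "a \<noteq> 0"
  proof
    assume "a = 0" then have "d = 0" using a by simp
    then show False using d(2) by simp
  qed
  have "sc (inverse a) d \<in> B0" using B0sub d(1) by (rule C.subspace_scale)
  then have "1 \<in> B0" using \<open>a \<noteq> 0\<close> by (simp add: a)
  then have oneB: "1 \<in> B" using B0(2) by blast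
  have key: "f 1 = 0" if lf: "lfun sc f" and MV: "\<forall>v\<in>V0. Mv f v = 0" for f
  proof -
    have "G \<subseteq> {d. f d = 0}"
    proof
      fix d assume "d \<in> G"
      then obtain i v where d: "d = cc i v" "i < m" "v \<in> V0" by (auto simp: G_def)
      show "d \<in> {d. f d = 0}" using MV d by (simp add: f_cc lf)
    qed
    then have "B \<subseteq> {d. f d = 0}" unfolding B_def by (rule C.span_minimal[OF _ lfun_kernel[OF lf]])
    then show ?thesis using oneB by blast
  qed
  obtain Bs where Bs: "Bs \<subseteq> V0" "FV.independent Bs" "V0 \<subseteq> FV.span Bs" "card Bs = FV.dim V0"
    by (rule FV.basis_exists)
  have "Bs \<subseteq> FV.span (dl ` {..<m})" using Bs(1) V0(1) Sup_span by (auto simp: Inv_def)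
  from FV.independent_span_bound[OF finF Bs(2) this] have "finite Bs" by (rule conjunct1)
  then obtain xs where xs: "set xs = Bs" using finite_list by blast
  have "\<exists>u\<in>V0. u \<noteq> 0 \<and> (\<forall>g. lfun sc g \<longrightarrow> Mv g u = vsc (g 1) u)"
  proof (rule eig_ind[OF V0(1) sim, of xs "[]"])
    show "set xs \<subseteq> V0" using xs Bs by simp
    show "set [] \<subseteq> V0" by simp
    show "\<exists>f. lfun sc f \<and> (\<forall>y\<in>set []. Mv f y = 0) \<and> f 1 \<noteq> 0"
      using lfun_e e1 by auto
    show "\<forall>f. lfun sc f \<longrightarrow> (\<forall>x\<in>set xs. Mv f x = 0) \<longrightarrow> (\<forall>y\<in>set []. Mv f y = 0) \<longrightarrow> f 1 = 0"
    proof (intro allI impI)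
      fix f assume lf: "lfun sc f" and z: "\<forall>x\<in>set xs. Mv f x = 0"
      have sub: "FV.subspace {v. Mv f v = 0}"
        by (rule FV.subspaceI) (auto simp: Mv_addv Mv_scalev Mv_0v)
      have "FV.span Bs \<subseteq> {v. Mv f v = 0}"
        by (rule FV.span_minimal[OF _ sub]) (use z xs in auto)
      then have "\<forall>v\<in>V0. Mv f v = 0" using Bs(3) by blast
      then show "f 1 = 0" by (rule key[OF lf])
    qed
  qed blast+
  then obtain u where u: "u \<in> V0" "u \<noteq> 0" "\<And>g. lfun sc g \<Longrightarrow> Mv g u = vsc (g 1) u" by blast
  have uS: "u \<in> Sup" using u(1) V0(1) by (auto simp: Inv_def)
  show ?thesis
  proof (rule exI[of _ u], intro conjI allI impI)
    obtain j where "u j \<noteq> 0" using u(2) by (auto simp: fun_eq_iff)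
    moreover have "j < m"
    proof (rule ccontr)
      assume "\<not> j < m"
      then have "u j = 0" using uS unfolding Sup_def by simp
      then show False using \<open>u j \<noteq> 0\<close> by simp
    qed
    ultimately show "\<exists>j<m. u j \<noteq> 0" by blast
    fix i assume i: "i < m"
    show "(\<Sum>j<m. sc (u j) (cf i j)) = sc (u i) 1"
    proof (rule ccontr)
      assume ne: "(\<Sum>j<m. sc (u j) (cf i j)) \<noteq> sc (u i) 1"
      then have "(\<Sum>j<m. sc (u j) (cf i j)) - sc (u i) 1 \<noteq> 0" by simp
      then obtain g where lg: "lfun sc g" and gn: "g ((\<Sum>j<m. sc (u j) (cf i j)) - sc (u i) 1) \<noteq> 0"
        using separate[OF vs] by blast
      have "g ((\<Sum>j<m. sc (u j) (cf i j)) - sc (u i) 1) = Mv g u i - u i * g 1"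
        using lg i by (simp add: lfun_diff lfun_scale f_cc[symmetric] cc_def)
      also have "\<dots> = 0" using u(3)[OF lg] by simp
      finally show False using gn by simp
    qed
  qed
qed
end


theorem proposition7p1:
  fixes sc :: "'k::field \<Rightarrow> 'c::comm_ring_1 \<Rightarrow> 'c"
    and D :: "'c \<Rightarrow> ('c \<times> 'c) list" and e :: "'c \<Rightarrow> 'k" and S :: "'c \<Rightarrow> 'c"
    and m :: nat and cf :: "nat \<Rightarrow> nat \<Rightarrow> 'c" and br :: "nat \<Rightarrow> nat \<Rightarrow> 'c \<Rightarrow> 'k"
  assumes char: "(2::'k) \<noteq> 0"
    and HC: "HC_pair sc D e S m cf br"
  shows "((\<exists>w :: nat \<Rightarrow> 'k. (\<exists>j<m. w j \<noteq> 0) \<and>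
            (\<forall>i<m. (\<Sum>j<m. sc (w j) (cf i j)) = sc (w i) 1))
          \<longrightarrow> has_nonzero_odd_primitive sc D e m cf br) \<and>
         (coradical sc D = range (\<lambda>a. sc a 1) \<and> m > 0
          \<longrightarrow> has_nonzero_odd_primitive sc D e m cf br)"
proof -
  interpret hcb sc D e S m cf
    using HC by unfold_locales (simp_all add: HC_pair_def)
  have brp: "\<forall>i<m. \<forall>j<m. br i j \<in> prim_dual sc e"
    using HC by (simp add: HC_pair_def dual_HC_def)
  have A: "has_nonzero_odd_primitive sc D e m cf br"
    if "\<exists>w :: nat \<Rightarrow> 'k. (\<exists>j<m. w j \<noteq> 0) \<and> (\<forall>i<m. (\<Sum>j<m. sc (w j) (cf i j)) = sc (w i) 1)"
    using that part1[OF brp] by blast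
  show ?thesis
  proof (intro conjI impI)
    show "has_nonzero_odd_primitive sc D e m cf br"
      if "\<exists>w :: nat \<Rightarrow> 'k. (\<exists>j<m. w j \<noteq> 0) \<and> (\<forall>i<m. (\<Sum>j<m. sc (w j) (cf i j)) = sc (w i) 1)"
      using A that by blast
    show "has_nonzero_odd_primitive sc D e m cf br"
      if "coradical sc D = range (\<lambda>a. sc a 1) \<and> m > 0"
      using A part2 that by blast
  qed
qed

end
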